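(* Consider the network model, interest-based mobility model and FirstMeeting (FM) routing described in the context. Let $T_2$ be the random variable equal to $0$ if the first node met by $S$ among $\{D,R_1,\dots,R_n\}$ is $D$, and otherwise, if this first node is the relay $R_j$ met at time $T_1$, equal to the time elapsed from $T_1$ until the first of $S$ and $R_j$ meets $D$. Then there exist constants $c,c'>0$ such that for all sufficiently large $n$, $$\mathbb{E}[T_2]\ge\min\Big\{c\log(1/\delta(n)),\ \frac{c'n}{\log n}\Big\}.$$
   Context: Network: fix an integer $m\ge 2$ independent of $n$. There are $n+2$ nodes: a source $S$, a destination $D$ and relays $R_1,\dots,R_n$. Each node $X$ has an interest profile, a unit vector in the closed positive orthant of the unit sphere of $\mathbb{R}^m$; $\cos\angle(X,Y)=\langle X,Y\rangle$. $S=(1,0,\dots,0)$, $D=(0,1,0,\dots,0)$. Relay profiles are i.i.d.: $\angle(S,R_i)$ is uniform on $[0,\pi/2]$, and given this angle $R_i$ is uniform among unit vectors of the positive orthant making that angle with $S$. Profiles are fixed in time. Conditional on the profiles, for each unordered pair $\{A,B\}$ the meeting instants form a Poisson process of rate $\lambda_{AB}$, independently over pairs, from time $0$. Interest-based mobility: $\lambda_{AB}=k\cos\angle(A,B)+\delta$, with $\lambda>0$ fixed, $\delta=\delta(n)>0$, $\delta(n)\to0$, $k=\frac{\pi}{2}(\lambda-\delta)$. FM routing: $S$ holds two copies and always keeps one; the second copy goes to the first relay met by $S$ if it is met before $D$, after which no more copies are created or transferred and the message is delivered when the first of $S$ and that relay meets $D$. Expectations are over the profiles and the meeting processes. *)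

theory Defs
  imports "HOL-Probability.Probability"
begin

text \<open>Profiles are vectors in R^m represented as extensional functions on {..<m}.\<close>

definition inner_m :: "nat \<Rightarrow> (nat \<Rightarrow> real) \<Rightarrow> (nat \<Rightarrow> real) \<Rightarrow> real" where
  "inner_m m x y = (\<Sum>i<m. x i * y i)"

definition unit_vec :: "nat \<Rightarrow> nat \<Rightarrow> (nat \<Rightarrow> real)" where
  "unit_vec m i = restrict (\<lambda>j. if j = i then 1 else 0) {..<m}"

text \<open>Uniform (normalized surface) measure on the positive orthant of the unit sphere
  of R^d, defined as the cone measure: normalized Lebesgue measure on the positive orthant
  of the unit ball pushed forward radially onto the sphere.\<close>
definition orthant_sphere :: "nat \<Rightarrow> (nat \<Rightarrow> real) measure" where
  "orthant_sphere d =
     distr (uniform_measure (PiM {..<d} (\<lambda>_. lborel))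
              {x \<in> space (PiM {..<d} (\<lambda>_. lborel)). (\<forall>i<d. 0 \<le> x i) \<and> (\<Sum>i<d. (x i)^2) \<le> 1})
           (PiM {..<d} (\<lambda>_. lborel))
           (\<lambda>x. restrict (\<lambda>i. x i / sqrt (\<Sum>j<d. (x j)^2)) {..<d})"

text \<open>Relay profile law: angle theta with S uniform on [0,pi/2]; given theta, the profile is
  (cos theta, sin theta * u) with u uniform on the positive orthant of the unit sphere of R^(m-1).\<close>
definition relay_dist :: "nat \<Rightarrow> (nat \<Rightarrow> real) measure" where
  "relay_dist m =
     distr (uniform_measure lborel {0..pi/2} \<Otimes>\<^sub>M orthant_sphere (m - 1))
           (PiM {..<m} (\<lambda>_. lborel))
           (\<lambda>(\<theta>, u). restrict (\<lambda>i. if i = 0 then cos \<theta> else sin \<theta> * u (i - 1)) {..<m})"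

definition exp1 :: "real measure" where
  "exp1 = density lborel (exponential_density 1)"

text \<open>Sample space: relay profiles (i.i.d.) and, for every pair (a,b) with a<b and every
  q, an Exp(1) variable; the q-th meeting of pair {a,b} happens at
  (sum of the first q+1 of these)/rate, i.e. a Poisson process of that rate.
  Nodes: 0 = S, 1 = D, j+2 = R_(j+1) for j < n.\<close>
definition fm_space :: "nat \<Rightarrow> nat \<Rightarrow> ((nat \<Rightarrow> (nat \<Rightarrow> real)) \<times> (nat \<times> nat \<times> nat \<Rightarrow> real)) measure" where
  "fm_space m n = PiM {..<n} (\<lambda>_. relay_dist m) \<Otimes>\<^sub>M PiM UNIV (\<lambda>_. exp1)"

definition node_profile :: "nat \<Rightarrow> (nat \<Rightarrow> (nat \<Rightarrow> real)) \<Rightarrow> nat \<Rightarrow> (nat \<Rightarrow> real)" where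
  "node_profile m \<rho> x = (if x = 0 then unit_vec m 0 else if x = 1 then unit_vec m 1 else \<rho> (x - 2))"

text \<open>Interest-based rate: k cos(angle) + delta with k = pi/2 (lambda - delta).\<close>
definition meet_rate :: "nat \<Rightarrow> real \<Rightarrow> real \<Rightarrow> (nat \<Rightarrow> (nat \<Rightarrow> real)) \<Rightarrow> nat \<Rightarrow> nat \<Rightarrow> real" where
  "meet_rate m lam del \<rho> a b =
     pi / 2 * (lam - del) * inner_m m (node_profile m \<rho> a) (node_profile m \<rho> b) + del"

definition meet_time :: "nat \<Rightarrow> real \<Rightarrow> real \<Rightarrow> (nat \<Rightarrow> (nat \<Rightarrow> real)) \<Rightarrow> (nat \<times> nat \<times> nat \<Rightarrow> real)
    \<Rightarrow> nat \<Rightarrow> nat \<Rightarrow> nat \<Rightarrow> real" where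
  "meet_time m lam del \<rho> \<omega> a b q =
     (\<Sum>l\<le>q. \<omega> (min a b, max a b, l)) / meet_rate m lam del \<rho> a b"

definition next_meet :: "nat \<Rightarrow> real \<Rightarrow> real \<Rightarrow> (nat \<Rightarrow> (nat \<Rightarrow> real)) \<Rightarrow> (nat \<times> nat \<times> nat \<Rightarrow> real)
    \<Rightarrow> nat \<Rightarrow> nat \<Rightarrow> real \<Rightarrow> real" where
  "next_meet m lam del \<rho> \<omega> a b t = Inf {s. \<exists>q. s = meet_time m lam del \<rho> \<omega> a b q \<and> t < s}"

definition fm_T2 :: "nat \<Rightarrow> real \<Rightarrow> real \<Rightarrow> nat
    \<Rightarrow> (nat \<Rightarrow> (nat \<Rightarrow> real)) \<times> (nat \<times> nat \<times> nat \<Rightarrow> real) \<Rightarrow> real" where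
  "fm_T2 m lam del n = (\<lambda>(\<rho>, \<omega>).
     (let j = (ARG_MIN (\<lambda>x. meet_time m lam del \<rho> \<omega> 0 x 0) x. x \<in> {1..<n+2})
      in if j = 1 then 0
         else (let t1 = meet_time m lam del \<rho> \<omega> 0 j 0
               in min (next_meet m lam del \<rho> \<omega> 0 1 t1) (next_meet m lam del \<rho> \<omega> j 1 t1) - t1)))"

end

theory Submission
  imports Defs
begin

lemma exp1_prob: "prob_space exp1"
  unfolding exp1_def by (rule prob_space_exponential_density) simp

lemma space_exp1[simp]: "space exp1 = UNIV" and sets_exp1[simp, measurable_cong]: "sets exp1 = sets borel"
  unfolding exp1_def by auto

lemma exp1_distr: "distributed exp1 lborel (\<lambda>x. x) (exponential_density 1)"
  unfolding distributed_def exp1_def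
  by (auto simp: distr_id2 AE_I2 exponential_density_nonneg)

lemma exp1_gt: "0 \<le> a \<Longrightarrow> emeasure exp1 {x. a < x} = ennreal (exp (- a))"
proof -
  assume a: "0 \<le> a"
  interpret prob_space exp1 by (rule exp1_prob)
  have "\<P>(x in exp1. a < x) = exp (- a * 1)"
    by (rule exponential_distributedD_gt[OF exp1_distr a]) simp
  then show ?thesis by (simp add: emeasure_eq_measure)
qed

lemma exp1_le: "0 \<le> a \<Longrightarrow> emeasure exp1 {x. x \<le> a} = ennreal (1 - exp (- a))"
proof -
  assume a: "0 \<le> a"
  interpret prob_space exp1 by (rule exp1_prob)
  have "\<P>(x in exp1. x \<le> a) = 1 - exp (- a * 1)"
    by (rule exponential_distributedD_le[OF exp1_distr a]) simp
  then show ?thesis by (simp add: emeasure_eq_measure)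
qed

lemma exp1_nonneg: "AE x in exp1. 0 \<le> x"
  unfolding exp1_def by (subst AE_density) (auto simp: exponential_density_def)

abbreviation "PL d \<equiv> PiM {..<d} (\<lambda>_::nat. (lborel::real measure))"

definition oball :: "nat \<Rightarrow> (nat \<Rightarrow> real) set" where
 "oball d = {x \<in> space (PL d). (\<forall>i<d. 0 \<le> x i) \<and> (\<Sum>i<d. (x i)^2) \<le> 1}"

definition osmap :: "nat \<Rightarrow> (nat \<Rightarrow> real) \<Rightarrow> (nat \<Rightarrow> real)" where
 "osmap d = (\<lambda>x. restrict (\<lambda>i. x i / sqrt (\<Sum>j<d. (x j)^2)) {..<d})"

lemma oball_sets[measurable]: "oball d \<in> sets (PL d)"
  unfolding oball_def by measurable

lemma osmap_meas[measurable]: "osmap d \<in> measurable (PL d) (PL d)"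
  unfolding osmap_def by measurable

lemma PLsf: "product_sigma_finite (\<lambda>_::nat. (lborel::real measure))"
  unfolding product_sigma_finite_def by (auto intro: lborel.sigma_finite_measure_axioms)

lemma oball_pos: assumes "d \<ge> 1" shows "emeasure (PL d) (oball d) \<noteq> 0"
proof -
  have sub: "PiE {..<d} (\<lambda>_. {0..1/real d}) \<subseteq> oball d"
  proof
    fix x assume x: "x \<in> PiE {..<d} (\<lambda>_. {0..1/real d})"
    have "(\<Sum>i<d. (x i)^2) \<le> (\<Sum>i<d. 1/real d)"
    proof (rule sum_mono)
      fix i assume "i \<in> {..<d}"
      then have "x i \<in> {0..1/real d}" using PiE_mem[OF x] by blast
      then have a: "0 \<le> x i" "x i \<le> 1/real d" by auto
      have "1/real d \<le> 1" using assms by simp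
      then have "x i \<le> 1" using a by linarith
      then have "(x i)^2 \<le> x i" using a by (simp add: power2_eq_square mult_left_le)
      then show "(x i)^2 \<le> 1/real d" using a by linarith
    qed
    also have "\<dots> = 1" using assms by simp
    finally have s1: "(\<Sum>i<d. (x i)^2) \<le> 1" .
    have s2: "x \<in> space (PL d)" using x unfolding space_PiM by (auto simp: PiE_iff)
    have s3: "\<forall>i<d. 0 \<le> x i" using x by (auto simp: PiE_iff)
    show "x \<in> oball d" using s1 s2 s3 unfolding oball_def by blast
  qed
  have "emeasure (PL d) (PiE {..<d} (\<lambda>_. {0..1/real d})) = (\<Prod>i<d. emeasure lborel {0..1/real d})"
    by (rule product_sigma_finite.emeasure_PiM[OF PLsf]) auto
  also have "\<dots> = (\<Prod>i<d. ennreal (1/real d))" using assms by simp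
  also have "\<dots> \<noteq> 0" using assms by (simp add: prod_zero_iff)
  finally have "emeasure (PL d) (PiE {..<d} (\<lambda>_. {0..1/real d})) \<noteq> 0" .
  moreover have "emeasure (PL d) (PiE {..<d} (\<lambda>_. {0..1/real d})) \<le> emeasure (PL d) (oball d)"
    by (rule emeasure_mono[OF sub]) simp
  ultimately show ?thesis by (metis le_zero_eq)
qed

lemma oball_fin: "emeasure (PL d) (oball d) \<noteq> \<infinity>"
proof -
  have sub: "oball d \<subseteq> PiE {..<d} (\<lambda>_. {0..1})"
  proof
    fix x assume x: "x \<in> oball d"
    { fix i assume i: "i < d"
      have "(x i)^2 \<le> (\<Sum>j<d. (x j)^2)"
        using i by (intro member_le_sum) auto
      also have "\<dots> \<le> 1" using x by (simp add: oball_def)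
      finally have "(x i)^2 \<le> 1" .
      then have "x i \<le> 1" by (simp add: abs_square_le_1)
      moreover have "0 \<le> x i" using x i by (simp add: oball_def)
      ultimately have "x i \<in> {0..1}" by simp }
    then show "x \<in> PiE {..<d} (\<lambda>_. {0..1})" using x by (auto simp: oball_def space_PiM PiE_iff)
  qed
  have "emeasure (PL d) (PiE {..<d} (\<lambda>_. {0..1})) = (\<Prod>i<d. emeasure lborel {0..1::real})"
    by (rule product_sigma_finite.emeasure_PiM[OF PLsf]) auto
  also have "\<dots> = 1" by simp
  finally have "emeasure (PL d) (oball d) \<le> 1"
    using emeasure_mono[OF sub, of "PL d"] by simp
  then show ?thesis by (auto simp: top_unique)
qed

lemma os_eq: "orthant_sphere d = distr (uniform_measure (PL d) (oball d)) (PL d) (osmap d)"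
  unfolding orthant_sphere_def oball_def osmap_def ..

lemma os_prob: "d \<ge> 1 \<Longrightarrow> prob_space (orthant_sphere d)"
  unfolding os_eq
  by (intro prob_space.prob_space_distr prob_space_uniform_measure oball_pos oball_fin) auto

definition "UU d = {u \<in> space (PL d). 0 \<le> u 0 \<and> u 0 \<le> 1}"

lemma UU_sets: assumes "0 < d" shows "UU d \<in> sets (PL d)"
proof -
  have "UU d = (\<lambda>u. u 0) -` {0..1} \<inter> space (PL d)" by (auto simp: UU_def)
  also have "\<dots> \<in> sets (PL d)"
    by (rule measurable_sets[OF measurable_component_singleton]) (use assms in auto)
  finally show ?thesis .
qed

lemma os_UU: assumes "d \<ge> 1" shows "emeasure (orthant_sphere d) (UU d) = 1"
proof -
  have "emeasure (orthant_sphere d) (UU d) = emeasure (uniform_measure (PL d) (oball d)) (osmap d -` UU d \<inter> space (PL d))"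
    unfolding os_eq using UU_sets[of d] assms by (subst emeasure_distr) auto
  also have "oball d \<inter> (osmap d -` UU d \<inter> space (PL d)) = oball d"
  proof -
    { fix x assume x: "x \<in> oball d"
      have d0: "0 < d" using assms by simp
      have x0: "0 \<le> x 0" using x d0 by (simp add: oball_def)
      have "(x 0)^2 \<le> (\<Sum>j<d. (x j)^2)" using d0 by (intro member_le_sum) auto
      then have "sqrt ((x 0)^2) \<le> sqrt (\<Sum>j<d. (x j)^2)" by (rule real_sqrt_le_mono)
      then have le: "x 0 \<le> sqrt (\<Sum>j<d. (x j)^2)" using x0 by simp
      have "x 0 / sqrt (\<Sum>j<d. (x j)^2) \<le> 1"
        using le x0 sum_nonneg[of "{..<d}" "\<lambda>j. (x j)^2"] by (cases "sqrt (\<Sum>j<d. (x j)^2) = 0") (auto simp: divide_le_eq_1)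
      moreover have "0 \<le> x 0 / sqrt (\<Sum>j<d. (x j)^2)" using x0 by (intro divide_nonneg_nonneg) (auto intro!: sum_nonneg)
      ultimately have "osmap d x \<in> UU d"
        using d0 measurable_space[OF osmap_meas, of x] x
        by (auto simp: UU_def osmap_def oball_def)
    }
    then show ?thesis using oball_sets[THEN sets.sets_into_space] by auto
  qed
  then have "emeasure (uniform_measure (PL d) (oball d)) (osmap d -` UU d \<inter> space (PL d)) = 1"
    using oball_pos[OF assms] oball_fin
    by (subst emeasure_uniform_measure) (use UU_sets[of d] assms in \<open>auto intro!: ennreal_divide_self simp: measurable_sets[OF osmap_meas] less_top\<close>)
  finally show ?thesis .
qed

abbreviation "UT \<equiv> uniform_measure lborel {0..pi/2::real}"

lemma UT_prob: "prob_space UT"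
  by (rule prob_space_uniform_measure) auto

lemma UT_interval: assumes "0 \<le> b" "b \<le> pi/2" shows "emeasure UT {0..b} = ennreal (b / (pi/2))"
proof -
  have "{0..pi/2} \<inter> {0..b} = {0..b}" using assms by auto
  then show ?thesis using assms by (simp add: divide_ennreal)
qed

lemma sets_os[measurable_cong]: "sets (orthant_sphere d) = sets (PL d)"
  unfolding orthant_sphere_def by simp

definition rmap :: "nat \<Rightarrow> real \<times> (nat \<Rightarrow> real) \<Rightarrow> (nat \<Rightarrow> real)" where
  "rmap m x = restrict (\<lambda>i. if i = 0 then cos (fst x) else sin (fst x) * snd x (i - 1)) {..<m}"

lemma rd_eq: "relay_dist m = distr (UT \<Otimes>\<^sub>M orthant_sphere (m-1)) (PL m) (rmap m)"
  unfolding relay_dist_def rmap_def by (simp add: split_beta')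

lemma rmap_meas[measurable]: "rmap m \<in> measurable (UT \<Otimes>\<^sub>M orthant_sphere (m-1)) (PL m)"
  unfolding rmap_def
proof (rule measurable_restrict)
  fix i assume i: "i \<in> {..<m}"
  show "(\<lambda>x. if i = 0 then cos (fst x) else sin (fst x) * snd x (i - 1)) \<in> measurable (UT \<Otimes>\<^sub>M orthant_sphere (m-1)) lborel"
  proof (cases "i = 0")
    case True then show ?thesis by simp
  next
    case False
    have c0: "(\<lambda>u. u (i - 1)) \<in> measurable (PL (m - 1)) lborel"
      by (rule measurable_component_singleton) (use i False in auto)
    then have c: "(\<lambda>u. u (i - 1)) \<in> borel_measurable (PL (m - 1))" by simp
    have c2: "(\<lambda>u. u (i - 1)) \<in> borel_measurable (orthant_sphere (m - 1))"
      using c by (simp add: measurable_cong_sets[OF sets_os refl])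
    have "(\<lambda>x. snd x (i - 1)) \<in> borel_measurable (UT \<Otimes>\<^sub>M orthant_sphere (m-1))"
      by (rule measurable_compose[OF measurable_snd c2])
    then show ?thesis using False by simp
  qed
qed

lemma rd_prob: assumes "m \<ge> 2" shows "prob_space (relay_dist m)"
proof -
  interpret P: prob_space "UT \<Otimes>\<^sub>M orthant_sphere (m-1)"
    by (intro prob_space_pair UT_prob os_prob) (use assms in auto)
  show ?thesis unfolding rd_eq by (rule P.prob_space_distr) (rule rmap_meas)
qed

lemma sets_rd[measurable_cong]: "sets (relay_dist m) = sets (PL m)"
  unfolding rd_eq by simp

lemma rmap0: "0 < m \<Longrightarrow> rmap m x 0 = cos (fst x)"
  by (simp add: rmap_def)

lemma rmap1: "1 < m \<Longrightarrow> rmap m x 1 = sin (fst x) * snd x 0"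
  by (simp add: rmap_def)

lemma rd_lower:
  assumes m: "m \<ge> 2" and F: "F \<in> borel_measurable (PL m)" and b: "0 \<le> b" "b \<le> pi/2" and c: "0 \<le> c"
    and bound: "\<And>\<theta> u. \<theta> \<in> {0..b} \<Longrightarrow> u \<in> UU (m-1) \<Longrightarrow> ennreal c \<le> F (rmap m (\<theta>, u))"
  shows "ennreal (c * (b / (pi/2))) \<le> (\<integral>\<^sup>+v. F v \<partial>relay_dist m)"
proof -
  interpret OS: prob_space "orthant_sphere (m-1)" by (rule os_prob) (use m in auto)
  have UUs: "UU (m-1) \<in> sets (orthant_sphere (m-1))" using UU_sets[of "m-1"] m by simp
  have Fm: "F \<in> borel_measurable (relay_dist m)" using F by (simp add: measurable_cong_sets[OF sets_rd refl])
  have I1: "(\<integral>\<^sup>+v. F v \<partial>relay_dist m) = (\<integral>\<^sup>+x. F (rmap m x) \<partial>(UT \<Otimes>\<^sub>M orthant_sphere (m-1)))"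
    unfolding rd_eq
  proof (rule nn_integral_distr[OF rmap_meas[of m]])
    show "F \<in> borel_measurable (distr (UT \<Otimes>\<^sub>M orthant_sphere (m - 1)) (PL m) (rmap m))"
      using F by (subst measurable_cong_sets[OF sets_distr refl])
  qed
  have I2: "(\<integral>\<^sup>+x. ennreal c * indicator ({0..b} \<times> UU (m-1)) x \<partial>(UT \<Otimes>\<^sub>M orthant_sphere (m-1))) \<le> (\<integral>\<^sup>+x. F (rmap m x) \<partial>(UT \<Otimes>\<^sub>M orthant_sphere (m-1)))"
  proof (rule nn_integral_mono)
    fix x assume "x \<in> space (UT \<Otimes>\<^sub>M orthant_sphere (m-1))"
    show "ennreal c * indicator ({0..b} \<times> UU (m-1)) x \<le> F (rmap m x)"
    proof (cases "x \<in> {0..b} \<times> UU (m-1)")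
      case True
      then obtain t u where x: "x = (t, u)" "t \<in> {0..b}" "u \<in> UU (m-1)" by auto
      have "ennreal c \<le> F (rmap m (t, u))" by (rule bound) (use x in auto)
      then show ?thesis using True x by simp
    next
      case False then show ?thesis by simp
    qed
  qed
  have I3: "(\<integral>\<^sup>+x. ennreal c * indicator ({0..b} \<times> UU (m-1)) x \<partial>(UT \<Otimes>\<^sub>M orthant_sphere (m-1)))
      = ennreal c * emeasure (UT \<Otimes>\<^sub>M orthant_sphere (m-1)) ({0..b} \<times> UU (m-1))"
    by (rule nn_integral_cmult_indicator) (use UUs in simp)
  have I4: "emeasure (UT \<Otimes>\<^sub>M orthant_sphere (m-1)) ({0..b} \<times> UU (m-1)) = emeasure UT {0..b} * emeasure (orthant_sphere (m-1)) (UU (m-1))"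
    by (rule OS.emeasure_pair_measure_Times) (use UUs in simp_all)
  have I5: "emeasure (orthant_sphere (m-1)) (UU (m-1)) = 1" by (rule os_UU) (use m in simp)
  have eq: "ennreal (c * (b / (pi/2))) = ennreal c * ennreal (b / (pi/2))"
    by (rule ennreal_mult) (use c b in auto)
  have "ennreal (c * (b / (pi/2))) = (\<integral>\<^sup>+x. ennreal c * indicator ({0..b} \<times> UU (m-1)) x \<partial>(UT \<Otimes>\<^sub>M orthant_sphere (m-1)))"
    unfolding I3 I4 I5 UT_interval[OF b] eq by simp
  then show ?thesis using I1 I2 by (simp only:)
qed

abbreviation "PE \<equiv> PiM UNIV (\<lambda>_::nat\<times>nat\<times>nat. exp1)"
abbreviation "RM m n \<equiv> PiM {..<n} (\<lambda>_::nat. relay_dist m)"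

lemma PE_pps: "product_prob_space (\<lambda>_::nat\<times>nat\<times>nat. exp1)"
  unfolding product_prob_space_def product_sigma_finite_def product_prob_space_axioms_def
  using exp1_prob prob_space_imp_sigma_finite by blast

lemma PE_prob: "prob_space PE"
  by (rule prob_space_PiM) (rule exp1_prob)

lemma space_PE: "space PE = UNIV"
  unfolding space_PiM space_exp1 by (simp add: PiE_UNIV_domain)

lemma RM_prob: "m \<ge> 2 \<Longrightarrow> prob_space (RM m n)"
  using rd_prob[of m] by (intro prob_space_PiM) simp

lemma RM_psf: "m \<ge> 2 \<Longrightarrow> product_sigma_finite (\<lambda>_::nat. relay_dist m)"
  unfolding product_sigma_finite_def using rd_prob prob_space_imp_sigma_finite by blast

definition Js :: "nat \<Rightarrow> nat \<Rightarrow> (nat\<times>nat\<times>nat) set" where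
  "Js n i = insert (0,1,0) (insert (1,i+2,0) ((\<lambda>i'. (0,i'+2,0)) ` {..<n}))"

definition Xs :: "real \<Rightarrow> real \<Rightarrow> real \<Rightarrow> real \<Rightarrow> nat \<Rightarrow> (nat \<Rightarrow> nat \<Rightarrow> real) \<Rightarrow> nat\<times>nat\<times>nat \<Rightarrow> real set" where
 "Xs k dl al s i \<rho> c = (if c = (0,1,0) then {x. (al+s)*dl < x}
    else if c = (1,i+2,0) then {x. (al+s)*(k*\<rho> i 1+dl) < x}
    else if c = (0,i+2,0) then {x. x \<le> al*(k*\<rho> i 0+dl)}
    else {x. al*(k*\<rho> (fst (snd c) - 2) 0 + dl) < x})"

definition Nice :: "real \<Rightarrow> real \<Rightarrow> nat \<Rightarrow> nat \<Rightarrow> (nat \<Rightarrow> nat \<Rightarrow> real) \<Rightarrow> bool" where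
  "Nice k dl n i \<rho> \<longleftrightarrow> (\<forall>i'\<in>{..<n}. 0 < k*\<rho> i' 0+dl) \<and> 0 < k*\<rho> i 1 + dl"

definition Cnd :: "real \<Rightarrow> real \<Rightarrow> nat \<Rightarrow> real \<Rightarrow> real \<Rightarrow> nat \<Rightarrow> (nat \<Rightarrow> nat \<Rightarrow> real) \<Rightarrow> (nat\<times>nat\<times>nat \<Rightarrow> real) \<Rightarrow> bool" where
  "Cnd k dl n al s i \<rho> \<omega> \<longleftrightarrow> Nice k dl n i \<rho> \<and> (\<forall>c\<in>Js n i. \<omega> c \<in> Xs k dl al s i \<rho> c)"

definition Fk :: "real \<Rightarrow> real \<Rightarrow> real \<Rightarrow> real \<Rightarrow> nat \<Rightarrow> nat \<Rightarrow> (nat \<Rightarrow> real) \<Rightarrow> ennreal" where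
  "Fk k dl al s i i' v = (if i' = i then of_bool (0 < k * v 0+dl \<and> 0 < k * v 1+dl) *
        ennreal ((1 - exp (-(al*(k * v 0+dl)))) * exp (-((al+s)*(k * v 1+dl))))
     else of_bool (0 < k * v 0+dl) * ennreal (exp (-(al*(k * v 0+dl)))))"

lemma Js_finite[measurable]: "finite (Js n i)" by (simp add: Js_def)

lemma Xs_sets[measurable]: "Xs k dl al s i \<rho> c \<in> sets borel"
  unfolding Xs_def by simp

lemma Js_prod: assumes "i < n"
  shows "(\<Prod>c\<in>Js n i. f c) = f (0,1,0) * (f (1,i+2,0) * (\<Prod>i'<n. f (0,i'+2,0)))"
proof -
  have inj: "inj_on (\<lambda>i'::nat. (0::nat,i'+2,0::nat)) {..<n}" by (auto simp: inj_on_def)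
  have n1: "(1::nat,i+2,0::nat) \<notin> (\<lambda>i'. (0,i'+2,0)) ` {..<n}" by auto
  have n0: "(0::nat,1::nat,0::nat) \<notin> insert (1,i+2,0) ((\<lambda>i'. (0,i'+2,0)) ` {..<n})" by auto
  have f: "finite (insert (1::nat,i+2,0::nat) ((\<lambda>i'. (0,i'+2,0)) ` {..<n}))" by simp
  have f2: "finite ((\<lambda>i'::nat. (0::nat,i'+2,0::nat)) ` {..<n})" by simp
  show ?thesis unfolding Js_def prod.insert[OF f n0] prod.insert[OF f2 n1] prod.reindex[OF inj]
    by (simp only: o_def)
qed

lemma S_sets: "{\<omega> \<in> space PE. \<forall>c\<in>Js n i. \<omega> c \<in> Xs k dl al s i \<rho> c} \<in> sets PE"
  by measurable

lemma inner:
  assumes i: "i < n" and al: "0 \<le> al" and s: "0 \<le> s" and dl: "0 < dl"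
  shows "(\<integral>\<^sup>+\<omega>. of_bool (Cnd k dl n al s i \<rho> \<omega>) \<partial>PE)
     = (\<Prod>i'<n. Fk k dl al s i i' (\<rho> i')) * ennreal (exp (-((al+s)*dl)))"
proof (cases "Nice k dl n i \<rho>")
  case False
  then have L: "(\<integral>\<^sup>+\<omega>. of_bool (Cnd k dl n al s i \<rho> \<omega>) \<partial>PE) = 0" by (simp add: Cnd_def)
  have "\<exists>i'\<in>{..<n}. Fk k dl al s i i' (\<rho> i') = 0"
  proof (cases "\<forall>i'\<in>{..<n}. 0 < k*\<rho> i' 0+dl")
    case True
    with False have "\<not> 0 < k*\<rho> i 1 + dl" by (simp add: Nice_def)
    then show ?thesis using i by (intro bexI[of _ i]) (auto simp: Fk_def)
  next
    case False
    then obtain i' where "i' \<in> {..<n}" "\<not> 0 < k*\<rho> i' 0+dl" by blast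
    then show ?thesis by (intro bexI[of _ i']) (auto simp: Fk_def)
  qed
  then have "(\<Prod>i'<n. Fk k dl al s i i' (\<rho> i')) = 0" by (intro prod_zero) auto
  then show ?thesis using L by simp
next
  case True
  define r where "r i' = k*\<rho> i' 0+dl" for i'
  define q where "q = k*\<rho> i 1+dl"
  have rpos: "i' < n \<Longrightarrow> 0 < r i'" for i' using True by (simp add: Nice_def r_def)
  have qpos: "0 < q" using True by (simp add: Nice_def q_def)
  let ?S = "{\<omega> \<in> space PE. \<forall>c\<in>Js n i. \<omega> c \<in> Xs k dl al s i \<rho> c}"
  have ind: "of_bool (Cnd k dl n al s i \<rho> \<omega>) = indicator ?S \<omega>" for \<omega>
    using True by (simp add: Cnd_def space_PE indicator_def)
  have "(\<integral>\<^sup>+\<omega>. of_bool (Cnd k dl n al s i \<rho> \<omega>) \<partial>PE) = (\<integral>\<^sup>+\<omega>. indicator ?S \<omega> \<partial>PE)"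
    by (simp only: ind)
  also have "\<dots> = emeasure PE ?S" by (rule nn_integral_indicator[OF S_sets])
  also have "\<dots> = (\<Prod>c\<in>Js n i. emeasure exp1 (Xs k dl al s i \<rho> c))"
    by (rule product_prob_space.emeasure_PiM_Collect[OF PE_pps]) (auto simp: Js_finite)
  also have "\<dots> = emeasure exp1 (Xs k dl al s i \<rho> (0,1,0)) * (emeasure exp1 (Xs k dl al s i \<rho> (1,i+2,0))
       * (\<Prod>i'<n. emeasure exp1 (Xs k dl al s i \<rho> (0,i'+2,0))))"
    by (rule Js_prod[OF i])
  also have "emeasure exp1 (Xs k dl al s i \<rho> (0,1,0)) = ennreal (exp (-((al+s)*dl)))"
    using al s dl by (simp add: Xs_def exp1_gt)
  also have "emeasure exp1 (Xs k dl al s i \<rho> (1,i+2,0)) = ennreal (exp (-((al+s)*q)))"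
    using al s qpos by (simp add: Xs_def exp1_gt q_def)
  also have "(\<Prod>i'<n. emeasure exp1 (Xs k dl al s i \<rho> (0,i'+2,0)))
      = (\<Prod>i'<n. if i' = i then ennreal (1 - exp (-(al*r i))) else ennreal (exp (-(al*r i'))))"
  proof (rule prod.cong[OF refl])
    fix i' assume i': "i' \<in> {..<n}"
    show "emeasure exp1 (Xs k dl al s i \<rho> (0,i'+2,0)) = (if i' = i then ennreal (1 - exp (-(al*r i))) else ennreal (exp (-(al*r i'))))"
    proof (cases "i' = i")
      case True
      have "0 \<le> al * r i" using al rpos[OF i] by simp
      then show ?thesis using True by (simp add: Xs_def exp1_le r_def)
    next
      case False
      have "0 \<le> al * r i'" using al rpos[of i'] i' by simp
      then show ?thesis using False by (simp add: Xs_def exp1_gt r_def)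
    qed
  qed
  also have "(\<Prod>i'<n. Fk k dl al s i i' (\<rho> i'))
      = (\<Prod>i'<n. if i' = i then ennreal (1 - exp (-(al*r i))) * ennreal (exp (-((al+s)*q))) else ennreal (exp (-(al*r i'))))"
  proof (rule prod.cong[OF refl])
    fix i' assume i': "i' \<in> {..<n}"
    have e: "0 \<le> 1 - exp (-(al*r i))" using al rpos[OF i] by simp
    show "Fk k dl al s i i' (\<rho> i') = (if i' = i then ennreal (1 - exp (-(al*r i))) * ennreal (exp (-((al+s)*q))) else ennreal (exp (-(al*r i'))))"
      using rpos[OF i] rpos i' qpos e by (auto simp: Fk_def r_def q_def ennreal_mult)
  qed
  ultimately show ?thesis
    using i by (simp add: prod.remove[of "{..<n}" i] ac_simps cong: if_cong)
qed

lemma rd_comp: "j < m \<Longrightarrow> (\<lambda>v. v j) \<in> borel_measurable (relay_dist m)"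
proof -
  assume j: "j < m"
  have "(\<lambda>v. v j) \<in> measurable (PL m) lborel" by (rule measurable_component_singleton) (use j in simp)
  then have "(\<lambda>v. v j) \<in> borel_measurable (PL m)" by simp
  then show ?thesis by (simp add: measurable_cong_sets[OF sets_rd refl])
qed

lemma RM_comp: "i' < n \<Longrightarrow> j < m \<Longrightarrow> (\<lambda>\<rho>. \<rho> i' j) \<in> borel_measurable (RM m n)"
proof -
  assume i': "i' < n" and j: "j < m"
  have a: "(\<lambda>\<rho>. \<rho> i') \<in> measurable (RM m n) (relay_dist m)"
    by (rule measurable_component_singleton) (use i' in simp)
  show ?thesis by (rule measurable_compose[OF a rd_comp[OF j]])
qed

lemma P_comp: "i' < n \<Longrightarrow> j < m \<Longrightarrow> (\<lambda>x. fst x i' j) \<in> borel_measurable (RM m n \<Otimes>\<^sub>M PE)"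
  by (rule measurable_compose[OF measurable_fst RM_comp[of i' n j m]])

lemma P_compw: "(\<lambda>x. snd x c) \<in> borel_measurable (RM m n \<Otimes>\<^sub>M PE)"
proof -
  have a: "(\<lambda>\<omega>. \<omega> c) \<in> measurable PE exp1" by (rule measurable_component_singleton) simp
  have "(\<lambda>\<omega>. \<omega> c) \<in> borel_measurable PE" using a by (simp add: measurable_cong_sets[OF refl sets_exp1])
  then show ?thesis by (rule measurable_compose[OF measurable_snd])
qed

lemma Cnd_meas:
  assumes m: "m \<ge> 2" and i: "i < n"
  shows "Measurable.pred (RM m n \<Otimes>\<^sub>M PE) (\<lambda>x. Cnd k dl n al s i (fst x) (snd x))"
proof -
  have m0: "0 < m" and m1: "1 < m" using m by auto
  have N1: "Measurable.pred (RM m n \<Otimes>\<^sub>M PE) (\<lambda>x. \<forall>i'\<in>{..<n}. 0 < k * fst x i' 0 + dl)"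
  proof (rule pred_intros_finite(3))
    fix i' assume "i' \<in> {..<n}"
    then have i'n: "i' < n" by simp
    note [measurable] = P_comp[OF i'n m0]
    show "Measurable.pred (RM m n \<Otimes>\<^sub>M PE) (\<lambda>x. 0 < k * fst x i' 0 + dl)"
      by measurable
  qed simp
  have N2: "Measurable.pred (RM m n \<Otimes>\<^sub>M PE) (\<lambda>x. 0 < k * fst x i 1 + dl)"
  proof -
    note [measurable] = P_comp[OF i m1]
    show ?thesis by measurable
  qed
  have W: "Measurable.pred (RM m n \<Otimes>\<^sub>M PE) (\<lambda>x. \<forall>c\<in>Js n i. snd x c \<in> Xs k dl al s i (fst x) c)"
  proof (rule pred_intros_finite(3))
    fix c assume c: "c \<in> Js n i"
    note [measurable] = P_compw[of _ m n]
    show "Measurable.pred (RM m n \<Otimes>\<^sub>M PE) (\<lambda>x. snd x c \<in> Xs k dl al s i (fst x) c)"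
    proof (cases "c = (0,1,0)")
      case True then show ?thesis by (simp add: Xs_def)
    next
      case c0: False
      show ?thesis
      proof (cases "c = (1,i+2,0)")
        case True
        note [measurable] = P_comp[OF i m1]
        have e: "(\<lambda>x. snd x c \<in> Xs k dl al s i (fst x) c) = (\<lambda>x. (al+s)*(k * fst x i 1+dl) < snd x (1,i+2,0))"
          using True by (simp add: Xs_def)
        show ?thesis unfolding e by measurable
      next
        case c1: False
        then obtain i' where i': "i' < n" "c = (0,i'+2,0)" using c c0 by (auto simp: Js_def)
        note [measurable] = P_comp[OF i'(1) m0]
        show ?thesis
        proof (cases "i' = i")
          case True
          note [measurable] = P_comp[OF i m0]
          have e: "(\<lambda>x. snd x c \<in> Xs k dl al s i (fst x) c) = (\<lambda>x. snd x (0,i+2,0) \<le> al*(k * fst x i 0+dl))"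
            using True i' by (simp add: Xs_def)
          show ?thesis unfolding e by measurable
        next
          case False
          have e: "(\<lambda>x. snd x c \<in> Xs k dl al s i (fst x) c) = (\<lambda>x. al*(k * fst x i' 0+dl) < snd x (0,i'+2,0))"
            using False i' by (simp add: Xs_def)
          show ?thesis unfolding e by measurable
        qed
      qed
    qed
  qed (rule Js_finite)
  show ?thesis unfolding Cnd_def Nice_def using N1 N2 W by measurable
qed

lemma Fk_meas: assumes m: "m \<ge> 2" shows "Fk k dl al s i i' \<in> borel_measurable (relay_dist m)"
proof -
  have m0: "0 < m" and m1: "1 < m" using m by auto
  note [measurable] = rd_comp[OF m0] rd_comp[OF m1]
  have A: "(\<lambda>v. of_bool (0 < k * v 0+dl \<and> 0 < k * v 1+dl) *
        ennreal ((1 - exp (-(al*(k * v 0+dl)))) * exp (-((al+s)*(k * v 1+dl))))) \<in> borel_measurable (relay_dist m)"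
    by measurable
  have B: "(\<lambda>v. of_bool (0 < k * v 0+dl) * ennreal (exp (-(al*(k * v 0+dl))))) \<in> borel_measurable (relay_dist m)"
    by measurable
  show ?thesis
  proof (cases "i' = i")
    case True
    have "Fk k dl al s i i' = (\<lambda>v. of_bool (0 < k * v 0+dl \<and> 0 < k * v 1+dl) *
        ennreal ((1 - exp (-(al*(k * v 0+dl)))) * exp (-((al+s)*(k * v 1+dl)))))"
      using True by (simp add: Fk_def fun_eq_iff)
    then show ?thesis using A by (simp only:)
  next
    case False
    have "Fk k dl al s i i' = (\<lambda>v. of_bool (0 < k * v 0+dl) * ennreal (exp (-(al*(k * v 0+dl)))))"
      using False by (simp add: Fk_def fun_eq_iff)
    then show ?thesis using B by (simp only:)
  qed
qed

lemma outer:
  assumes m: "m \<ge> 2" and i: "i < n" and al: "0 \<le> al" and s: "0 \<le> s" and dl: "0 < dl"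
  shows "(\<integral>\<^sup>+x. of_bool (Cnd k dl n al s i (fst x) (snd x)) \<partial>(fm_space m n))
    = (\<Prod>i'<n. \<integral>\<^sup>+v. Fk k dl al s i i' v \<partial>relay_dist m) * ennreal (exp (-((al+s)*dl)))"
proof -
  interpret PEs: sigma_finite_measure PE using PE_prob prob_space_imp_sigma_finite by blast
  note [measurable] = Cnd_meas[OF m i]
  have meas: "(\<lambda>x. of_bool (Cnd k dl n al s i (fst x) (snd x)) :: ennreal) \<in> borel_measurable (RM m n \<Otimes>\<^sub>M PE)"
    by measurable
  have FM: "(\<lambda>\<rho>. Fk k dl al s i i' (\<rho> i')) \<in> borel_measurable (RM m n)" if "i' \<in> {..<n}" for i'
  proof -
    have a: "(\<lambda>\<rho>. \<rho> i') \<in> measurable (RM m n) (relay_dist m)"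
      by (rule measurable_component_singleton) (use that in simp)
    show ?thesis by (rule measurable_compose[OF a Fk_meas[OF m]])
  qed
  have PM: "(\<lambda>\<rho>. \<Prod>i'<n. Fk k dl al s i i' (\<rho> i')) \<in> borel_measurable (RM m n)"
    by (rule borel_measurable_prod_ennreal) (rule FM)
  have "(\<integral>\<^sup>+x. of_bool (Cnd k dl n al s i (fst x) (snd x)) \<partial>(fm_space m n))
      = (\<integral>\<^sup>+\<rho>. \<integral>\<^sup>+\<omega>. of_bool (Cnd k dl n al s i \<rho> \<omega>) \<partial>PE \<partial>RM m n)"
    unfolding fm_space_def using PEs.nn_integral_fst[OF meas] by simp
  also have "\<dots> = (\<integral>\<^sup>+\<rho>. (\<Prod>i'<n. Fk k dl al s i i' (\<rho> i')) * ennreal (exp (-((al+s)*dl))) \<partial>RM m n)"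
    by (rule nn_integral_cong) (rule inner[OF i al s dl])
  also have "\<dots> = (\<integral>\<^sup>+\<rho>. (\<Prod>i'<n. Fk k dl al s i i' (\<rho> i')) \<partial>RM m n) * ennreal (exp (-((al+s)*dl)))"
    by (rule nn_integral_multc[OF PM])
  also have "(\<integral>\<^sup>+\<rho>. (\<Prod>i'<n. Fk k dl al s i i' (\<rho> i')) \<partial>RM m n) = (\<Prod>i'<n. \<integral>\<^sup>+v. Fk k dl al s i i' v \<partial>relay_dist m)"
    by (rule product_sigma_finite.product_nn_integral_prod[OF RM_psf[OF m]]) (auto intro: Fk_meas[OF m])
  finally show ?thesis .
qed

lemma one_minus_exp: fixes x :: real assumes "0 \<le> x" "x \<le> 1" shows "x/2 \<le> 1 - exp (-x)"
proof -
  have e: "1 + x \<le> exp x" by simp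
  have "exp (-x) = 1 / exp x" by (simp add: exp_minus field_simps)
  also have "\<dots> \<le> 1 / (1 + x)" using e assms by (intro divide_left_mono) auto
  also have "\<dots> \<le> 1 - x/2"
  proof -
    have "x * (1 - x) \<ge> 0" using assms by simp
    then have "1 \<le> (1 - x/2) * (1 + x)" by (simp add: algebra_simps)
    then show ?thesis using assms by (simp add: divide_le_eq)
  qed
  finally show ?thesis by simp
qed

lemma Fk_measPL: "m \<ge> 2 \<Longrightarrow> Fk k dl al s i i' \<in> borel_measurable (PL m)"
  by (subst measurable_cong_sets[OF sets_rd[symmetric] refl]) (rule Fk_meas)

lemma Fk_other:
  assumes m: "m \<ge> 2" and k: "0 \<le> k" and dl: "0 < dl" and al: "0 \<le> al" and K: "k + dl \<le> K" and ii: "i' \<noteq> i"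
  shows "ennreal (exp (-(al*K))) \<le> (\<integral>\<^sup>+v. Fk k dl al s i i' v \<partial>relay_dist m)"
proof -
  have m0: "0 < m" using m by simp
  have "ennreal (exp (-(al*K)) * ((pi/2) / (pi/2))) \<le> (\<integral>\<^sup>+v. Fk k dl al s i i' v \<partial>relay_dist m)"
  proof (rule rd_lower[OF m Fk_measPL[OF m]])
    fix t u assume t: "t \<in> {0..pi/2}" and u: "u \<in> UU (m-1)"
    have c0: "0 \<le> cos t" using t by (intro cos_ge_zero) auto
    have c1: "cos t \<le> 1" by simp
    have kc: "k * cos t \<le> k" using k c1 by (simp add: mult_left_le)
    have kc0: "0 \<le> k * cos t" using k c0 by simp
    have pos: "0 < k * cos t + dl" using kc0 dl by simp
    have "al * (k * cos t + dl) \<le> al * K" using al kc K by (intro mult_left_mono) auto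
    then have "exp (-(al*K)) \<le> exp (-(al * (k * cos t + dl)))" by simp
    then show "ennreal (exp (-(al*K))) \<le> Fk k dl al s i i' (rmap m (t, u))"
      using ii pos by (simp add: Fk_def rmap0[OF m0])
  qed auto
  then show ?thesis by simp
qed

lemma Fk_self:
  assumes m: "m \<ge> 2" and lam: "0 < lam" and dl: "0 < dl" "dl \<le> 1" "dl \<le> lam/2"
    and kdef: "k = pi/2*(lam-dl)" and Kdef: "K = pi*lam/2 + 1"
    and al: "0 < al" "al * K \<le> 1" and s: "0 \<le> s" "s * dl \<le> 1"
  shows "ennreal (al*lam/8*exp(-(K+2)) * ((1/(1+s)) / (pi/2))) \<le> (\<integral>\<^sup>+v. Fk k dl al s i i v \<partial>relay_dist m)"
proof (rule rd_lower[OF m Fk_measPL[OF m]])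
  have m0: "0 < m" and m1: "1 < m" using m by auto
  have pi3: "3 < pi" by (rule pi_gt3)
  have keq: "k = pi*lam/2 - pi*dl/2" unfolding kdef by (simp add: field_simps)
  have pd: "pi*dl \<le> pi*(lam/2)" using dl by (intro mult_left_mono) auto
  have pd0: "0 \<le> pi*dl" using dl by simp
  have k4: "pi*lam/4 \<le> k" using keq pd by simp
  have k2: "k \<le> pi*lam/2" using keq pd0 by simp
  have pl0: "0 \<le> pi*lam" using lam by simp
  have k0: "0 \<le> k" using k4 pl0 by simp
  have kK: "k + dl \<le> K" using k2 dl Kdef by simp
  have K1: "1 \<le> K" using Kdef pl0 by simp
  have "al * 1 \<le> al * K" using K1 al by (intro mult_left_mono) auto
  then have al1: "al \<le> 1" using al by linarith
  show "0 \<le> 1/(1+s)" using s by simp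
  show "1/(1+s) \<le> pi/2"
  proof -
    have "1/(1+s) \<le> 1" using s by simp
    then show ?thesis using pi3 by linarith
  qed
  show "0 \<le> al*lam/8*exp(-(K+2))" using al lam by simp
  fix t u assume t: "t \<in> {0..1/(1+s)}" and u: "u \<in> UU (m-1)"
  have t0: "0 \<le> t" and t1: "(1+s)*t \<le> 1" using t s by (auto simp: field_simps)
  have "1/(1+s) \<le> 1" using s by simp
  then have tle1: "t \<le> 1" using t by simp
  have u0: "0 \<le> u 0" "u 0 \<le> 1" using u by (auto simp: UU_def)
  have cos2: "1/2 \<le> cos t"
  proof -
    have "cos (pi/3) \<le> cos t" by (rule cos_monotone_0_pi_le) (use t0 tle1 pi3 in auto)
    then show ?thesis by (simp add: cos_60)
  qed
  have sin0: "0 \<le> sin t" using t0 tle1 pi3 by (intro sin_ge_zero) auto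
  have sint: "sin t \<le> t" by (rule sin_x_le_x[OF t0])
  define r where "r = k * cos t + dl"
  define q where "q = k * (sin t * u 0) + dl"
  have r4: "lam/4 \<le> r"
  proof -
    have "k * (1/2) \<le> k * cos t" using k0 cos2 by (intro mult_left_mono) auto
    moreover have "2 * lam \<le> pi * lam" using pi3 lam by (intro mult_right_mono) auto
    moreover have "lam/4 \<le> k/2" using k4 calculation(2) by linarith
    ultimately show ?thesis using dl unfolding r_def by linarith
  qed
  have rK: "r \<le> K"
  proof -
    have "k * cos t \<le> k" using k0 by (simp add: mult_left_le)
    then show ?thesis using kK unfolding r_def by simp
  qed
  have r0: "0 < r" using r4 lam by simp
  have "al * r \<le> al * K" using al rK by (intro mult_left_mono) auto
  then have alr1: "al * r \<le> 1" using al by linarith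
  have alr0: "0 \<le> al * r" using al r0 by simp
  have A: "al*lam/8 \<le> 1 - exp (-(al*r))"
  proof -
    have "al*(lam/4) \<le> al*r" using r4 al by (intro mult_left_mono) auto
    then have "al*lam/8 \<le> (al*r)/2" by linarith
    also have "\<dots> \<le> 1 - exp (-(al*r))" by (rule one_minus_exp[OF alr0 alr1])
    finally show ?thesis .
  qed
  have "sin t * u 0 \<le> sin t" using sin0 u0 by (simp add: mult_left_le)
  then have su: "sin t * u 0 \<le> t" using sint by linarith
  have su0: "0 \<le> sin t * u 0" using sin0 u0 by simp
  have "0 \<le> k * (sin t * u 0)" using k0 su0 by simp
  then have q0: "0 < q" using dl unfolding q_def by linarith
  have qK: "(al+s)*q \<le> K+2"
  proof -
    have "k * (sin t * u 0) \<le> k * t" using su k0 by (rule mult_left_mono)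
    then have "q \<le> k*t + dl" unfolding q_def by linarith
    then have "(al+s)*q \<le> (1+s)*(k*t + dl)" using al1 s q0 al
      by (intro mult_mono) auto
    also have "\<dots> = k*((1+s)*t) + dl + s*dl" by (simp add: algebra_simps)
    also have "\<dots> \<le> k + dl + 1"
    proof -
      have "k*((1+s)*t) \<le> k" using k0 t1 by (simp add: mult_left_le)
      then show ?thesis using s(2) by linarith
    qed
    also have "\<dots> \<le> K + 2" using kK by simp
    finally show ?thesis .
  qed
  have B: "exp (-(K+2)) \<le> exp (-((al+s)*q))" using qK by simp
  have AB: "al*lam/8*exp(-(K+2)) \<le> (1 - exp (-(al*r))) * exp (-((al+s)*q))"
    by (rule mult_mono[OF A B]) (use al lam alr0 in auto)
  show "ennreal (al*lam/8*exp(-(K+2))) \<le> Fk k dl al s i i (rmap m (t, u))"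
  proof -
    have "ennreal (al*lam/8*exp(-(K+2))) \<le> ennreal ((1 - exp (-(al*r))) * exp (-((al+s)*q)))"
      by (rule ennreal_leI[OF AB])
    then show ?thesis unfolding Fk_def rmap0[OF m0] rmap1[OF m1] using r0 q0 by (simp add: r_def q_def)
  qed
qed

lemma prod_if_const: assumes "i < (n::nat)"
  shows "(\<Prod>i'<n. if i' = i then a else b) = a * (b::ennreal) ^ (n - 1)"
proof -
  have "(\<Prod>i'<n. if i' = i then a else b) = (if i = i then a else b) * (\<Prod>i'\<in>{..<n} - {i}. if i' = i then a else b)"
    by (rule prod.remove) (use assms in auto)
  also have "(\<Prod>i'\<in>{..<n} - {i}. if i' = i then a else b) = (\<Prod>i'\<in>{..<n} - {i}. b)"
    by (rule prod.cong) auto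
  also have "\<dots> = b ^ card ({..<n} - {i})" by simp
  also have "card ({..<n} - {i}) = n - 1" using assms by simp
  finally show ?thesis by simp
qed

lemma Cnd_lower:
  assumes m: "m \<ge> 2" and lam: "0 < lam" and dl: "0 < dl" "dl \<le> 1" "dl \<le> lam/2"
    and n: "1 \<le> n" and i: "i < n" and s: "0 \<le> s" "s * dl \<le> 1"
  defines "K \<equiv> pi*lam/2+1"
  shows "ennreal (lam*exp(-(K+2))*exp(-1)*exp(-2)/(4*pi*K) / (real n * (1+s)))
     \<le> (\<integral>\<^sup>+x. of_bool (Cnd (pi/2*(lam-dl)) dl n (1/(real n*K)) s i (fst x) (snd x)) \<partial>fm_space m n)"
proof -
  define k where "k = pi/2*(lam-dl)"
  define al where "al = 1/(real n*K)"
  have pl0: "0 \<le> pi*lam" using lam by simp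
  have K1: "1 \<le> K" unfolding K_def using pl0 by simp
  have K0: "0 < K" using K1 by simp
  have n0: "0 < real n" using n by simp
  have al0: "0 < al" unfolding al_def using K0 n0 by simp
  have alK: "al * K = 1 / real n" unfolding al_def using K0 n0 by simp
  have alK1: "al * K \<le> 1" unfolding alK using n by simp
  have "al * 1 \<le> al * K" using K1 al0 by (intro mult_left_mono) auto
  then have al1: "al \<le> 1" using alK1 by linarith
  have keq: "k = pi*lam/2 - pi*dl/2" unfolding k_def by (simp add: field_simps)
  have pd: "pi*dl \<le> pi*(lam/2)" using dl by (intro mult_left_mono) auto
  have pd0: "0 \<le> pi*dl" using dl by simp
  have pd': "pi*dl \<le> pi*lam/2" using pd by simp
  have k0: "0 \<le> k" using keq pd' pl0 by linarith
  have kK: "k + dl \<le> K" using keq pd0 dl unfolding K_def by linarith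
  define c1 where "c1 = al*lam/8*exp(-(K+2)) * ((1/(1+s)) / (pi/2))"
  define c2 where "c2 = exp (-(al*K))"
  define e0 where "e0 = exp (-((al+s)*dl))"
  have c1pos: "0 \<le> c1" unfolding c1_def using al0 lam s by simp
  have c2pos: "0 \<le> c2" unfolding c2_def by simp
  have I: "(\<integral>\<^sup>+x. of_bool (Cnd k dl n al s i (fst x) (snd x)) \<partial>fm_space m n)
    = (\<Prod>i'<n. \<integral>\<^sup>+v. Fk k dl al s i i' v \<partial>relay_dist m) * ennreal e0"
    unfolding e0_def by (rule outer[OF m i _ s(1) dl(1)]) (use al0 in simp)
  have P: "(\<Prod>i'<n. (if i' = i then ennreal c1 else ennreal c2)) \<le> (\<Prod>i'<n. \<integral>\<^sup>+v. Fk k dl al s i i' v \<partial>relay_dist m)"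
  proof (rule prod_mono_ennreal)
    fix i' assume "i' \<in> {..<n}"
    show "(if i' = i then ennreal c1 else ennreal c2) \<le> (\<integral>\<^sup>+v. Fk k dl al s i i' v \<partial>relay_dist m)"
    proof (cases "i' = i")
      case True
      have "ennreal c1 \<le> (\<integral>\<^sup>+v. Fk k dl al s i i v \<partial>relay_dist m)"
        unfolding c1_def by (rule Fk_self[OF m lam dl k_def K_def[THEN meta_eq_to_obj_eq] al0 alK1 s])
      then show ?thesis using True by simp
    next
      case False
      have "ennreal c2 \<le> (\<integral>\<^sup>+v. Fk k dl al s i i' v \<partial>relay_dist m)"
        unfolding c2_def by (rule Fk_other[OF m k0 dl(1) _ kK False]) (use al0 in simp)
      then show ?thesis using False by simp
    qed
  qed
  have Q: "(\<Prod>i'<n. (if i' = i then ennreal c1 else ennreal c2)) = ennreal (c1 * c2 ^ (n-1))"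
    unfolding prod_if_const[OF i] using c1pos c2pos by (simp add: ennreal_power ennreal_mult)
  have c2n: "exp (-1) \<le> c2 ^ (n-1)"
  proof -
    have "c2 ^ (n-1) = exp (real (n-1) * (-(al*K)))" unfolding c2_def by (rule exp_of_nat_mult[symmetric])
    moreover have "real (n-1) * (al*K) \<le> 1"
    proof -
      have "real (n-1) * (al*K) = real (n-1) / real n" unfolding alK by simp
      also have "\<dots> \<le> 1" using n0 by (simp add: divide_le_eq)
      finally show ?thesis .
    qed
    ultimately show ?thesis by simp
  qed
  have e0b: "exp (-2) \<le> e0"
  proof -
    have "(al+s)*dl = al*dl + s*dl" by (simp add: algebra_simps)
    moreover have "al*dl \<le> 1" using al0 al1 dl by (metis mult_le_one less_imp_le)
    ultimately have "(al+s)*dl \<le> 2" using s by linarith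
    then show ?thesis unfolding e0_def by simp
  qed
  have X: "lam*exp(-(K+2))*exp(-1)*exp(-2)/(4*pi*K) / (real n * (1+s)) = c1 * exp(-1) * exp(-2)"
  proof -
    have gen: "lam*E/(4*pi*K) / (real n * u) = (1/(real n*K))*lam/8*E'*((1/u)/(pi/2))*exp(-1)*exp(-2)"
      if "0 < u" "E = E' * exp(-1) * exp(-2)" for u E E' :: real
      using that K0 n0 pi_gt_zero by (simp add: field_simps)
    have u: "0 < 1 + s" using s by simp
    show ?thesis unfolding c1_def al_def
      using gen[OF u, of "exp(-(K+2))*exp(-1)*exp(-2)" "exp(-(K+2))"] by (simp add: mult.assoc)
  qed
  have R: "c1 * exp(-1) * exp(-2) \<le> c1 * c2^(n-1) * e0"
    using c1pos c2pos c2n e0b by (intro mult_mono) auto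
  have "ennreal (lam*exp(-(K+2))*exp(-1)*exp(-2)/(4*pi*K) / (real n * (1+s))) \<le> ennreal (c1 * c2^(n-1) * e0)"
    unfolding X by (rule ennreal_leI[OF R])
  also have "\<dots> = ennreal (c1 * c2 ^ (n-1)) * ennreal e0"
    by (rule ennreal_mult'') (simp add: e0_def)
  also have "\<dots> \<le> (\<Prod>i'<n. \<integral>\<^sup>+v. Fk k dl al s i i' v \<partial>relay_dist m) * ennreal e0"
    using P Q by (intro mult_right_mono) auto
  also have "\<dots> = (\<integral>\<^sup>+x. of_bool (Cnd k dl n al s i (fst x) (snd x)) \<partial>fm_space m n)"
    by (rule I[symmetric])
  finally show ?thesis unfolding k_def al_def .
qed

lemma inner_unit0: assumes "0 < m" shows "inner_m m (unit_vec m 0) v = v 0"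
proof -
  have "inner_m m (unit_vec m 0) v = (\<Sum>i<m. if i = 0 then v i else 0)"
    unfolding inner_m_def unit_vec_def by (rule sum.cong) auto
  also have "\<dots> = v 0" using assms by (simp add: sum.delta)
  finally show ?thesis .
qed

lemma inner_unit1: assumes "1 < m" shows "inner_m m v (unit_vec m 1) = v 1"
proof -
  have "inner_m m v (unit_vec m 1) = (\<Sum>i<m. if i = 1 then v i else 0)"
    unfolding inner_m_def unit_vec_def by (rule sum.cong) auto
  also have "\<dots> = v 1" using assms by (simp add: sum.delta)
  finally show ?thesis .
qed

lemma MR01: "2 \<le> m \<Longrightarrow> meet_rate m lam dl \<rho> 0 1 = dl"
  using inner_unit0[of m "unit_vec m 1"] by (simp add: meet_rate_def node_profile_def unit_vec_def)

lemma MR0: "2 \<le> m \<Longrightarrow> meet_rate m lam dl \<rho> 0 (i'+2) = pi/2*(lam-dl)*\<rho> i' 0 + dl"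
  using inner_unit0[of m "\<rho> i'"] by (simp add: meet_rate_def node_profile_def)

lemma MR1: "2 \<le> m \<Longrightarrow> meet_rate m lam dl \<rho> (i+2) 1 = pi/2*(lam-dl)*\<rho> i 1 + dl"
  using inner_unit1[of m "\<rho> i"] by (simp add: meet_rate_def node_profile_def)

lemma Cnd_expl:
  assumes C: "Cnd k dl n al s i \<rho> \<omega>" and i: "i < n"
  shows "\<forall>i'<n. 0 < k*\<rho> i' 0 + dl" "0 < k*\<rho> i 1 + dl"
    "\<omega> (0,i+2,0) \<le> al*(k*\<rho> i 0+dl)"
    "\<forall>i'<n. i' \<noteq> i \<longrightarrow> al*(k*\<rho> i' 0+dl) < \<omega> (0,i'+2,0)"
    "(al+s)*dl < \<omega> (0,1,0)"
    "(al+s)*(k*\<rho> i 1+dl) < \<omega> (1,i+2,0)"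
proof -
  have N: "Nice k dl n i \<rho>" and W: "\<And>c. c \<in> Js n i \<Longrightarrow> \<omega> c \<in> Xs k dl al s i \<rho> c"
    using C by (auto simp: Cnd_def)
  show "\<forall>i'<n. 0 < k*\<rho> i' 0 + dl" "0 < k*\<rho> i 1 + dl" using N by (auto simp: Nice_def)
  have "(0,i+2,0) \<in> Js n i" using i by (auto simp: Js_def)
  from W[OF this] show "\<omega> (0,i+2,0) \<le> al*(k*\<rho> i 0+dl)" by (simp add: Xs_def)
  show "\<forall>i'<n. i' \<noteq> i \<longrightarrow> al*(k*\<rho> i' 0+dl) < \<omega> (0,i'+2,0)"
  proof (intro allI impI)
    fix i' assume "i' < n" "i' \<noteq> i"
    then have "(0,i'+2,0) \<in> Js n i" by (auto simp: Js_def)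
    from W[OF this] \<open>i' \<noteq> i\<close> show "al*(k*\<rho> i' 0+dl) < \<omega> (0,i'+2,0)" by (simp add: Xs_def)
  qed
  have "(0,1,0) \<in> Js n i" by (simp add: Js_def)
  from W[OF this] show "(al+s)*dl < \<omega> (0,1,0)" by (simp add: Xs_def)
  have "(1,i+2,0) \<in> Js n i" by (simp add: Js_def)
  from W[OF this] show "(al+s)*(k*\<rho> i 1+dl) < \<omega> (1,i+2,0)" by (simp add: Xs_def)
qed

lemma Cnd_unique:
  assumes "Cnd k dl n al s i \<rho> \<omega>" "Cnd k dl n al s j \<rho> \<omega>" "i < n" "j < n"
  shows "i = j"
proof (rule ccontr)
  assume ne: "i \<noteq> j"
  have "\<omega> (0,i+2,0) \<le> al*(k*\<rho> i 0+dl)" by (rule Cnd_expl(3)[OF assms(1,3)])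
  moreover have "al*(k*\<rho> i 0+dl) < \<omega> (0,i+2,0)" using Cnd_expl(4)[OF assms(2,4)] assms(3) ne by blast
  ultimately show False by simp
qed

lemma next_meet_ge:
  assumes B: "\<And>q. B \<le> meet_time m lam dl \<rho> \<omega> a b q" and t: "t < B"
  shows "B \<le> next_meet m lam dl \<rho> \<omega> a b t"
  unfolding next_meet_def
proof (rule cInf_greatest)
  show "{s. \<exists>q. s = meet_time m lam dl \<rho> \<omega> a b q \<and> t < s} \<noteq> {}"
    using B[of 0] t by (intro notI) (smt (verit, best) empty_Collect_eq)
  show "\<And>x. x \<in> {s. \<exists>q. s = meet_time m lam dl \<rho> \<omega> a b q \<and> t < s} \<Longrightarrow> B \<le> x"
    using B by auto
qed

lemma meet_time_ge0:
  assumes nn: "\<forall>c. 0 \<le> \<omega> c" and r: "0 < meet_rate m lam dl \<rho> a b"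
  shows "\<omega> (min a b, max a b, 0) / meet_rate m lam dl \<rho> a b \<le> meet_time m lam dl \<rho> \<omega> a b q"
proof -
  have "\<omega> (min a b, max a b, 0) \<le> (\<Sum>l\<le>q. \<omega> (min a b, max a b, l))"
    by (rule member_le_sum) (use nn in auto)
  then show ?thesis unfolding meet_time_def using r by (intro divide_right_mono) auto
qed

lemma T2_ge:
  assumes m: "2 \<le> m" and i: "i < n" and al: "0 < al" and s: "0 \<le> s" and dl: "0 < dl"
    and nn: "\<forall>c. 0 \<le> \<omega> c" and C: "Cnd (pi/2*(lam-dl)) dl n al s i \<rho> \<omega>"
  shows "s \<le> fm_T2 m lam dl n (\<rho>, \<omega>)"
proof -
  define k where "k = pi/2*(lam-dl)"
  have C': "Cnd k dl n al s i \<rho> \<omega>" using C unfolding k_def .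
  note E = Cnd_expl[OF C' i]
  define f where "f = (\<lambda>x. meet_time m lam dl \<rho> \<omega> 0 x 0)"
  have fx: "f x = \<omega> (0,x,0) / meet_rate m lam dl \<rho> 0 x" for x unfolding f_def meet_time_def by simp
  have r0: "meet_rate m lam dl \<rho> 0 (i'+2) = k*\<rho> i' 0 + dl" for i' using MR0[OF m] unfolding k_def by simp
  have ri: "0 < k*\<rho> i 0 + dl" using E(1) i by simp
  have f_i: "f (i+2) \<le> al"
  proof -
    have "\<omega> (0,i+2,0) \<le> al*(k*\<rho> i 0 + dl)" by (rule E(3))
    then show ?thesis unfolding fx r0 using ri by (simp add: pos_divide_le_eq)
  qed
  have f_1: "al + s < f 1"
  proof -
    have "(al+s)*dl < \<omega> (0,1,0)" by (rule E(5))
    then show ?thesis unfolding fx MR01[OF m] using dl by (simp add: pos_less_divide_eq)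
  qed
  have f_o: "al < f (i'+2)" if "i' < n" "i' \<noteq> i" for i'
  proof -
    have rp: "0 < k*\<rho> i' 0 + dl" using E(1) that by simp
    have "al*(k*\<rho> i' 0+dl) < \<omega> (0,i'+2,0)" using E(4) that by simp
    then show ?thesis unfolding fx r0 using rp by (simp add: pos_less_divide_eq mult.commute)
  qed
  have others: "f (i+2) < f x" if "x \<in> {1..<n+2}" "x \<noteq> i+2" for x
  proof (cases "x = 1")
    case True then show ?thesis using f_i f_1 s by simp
  next
    case False
    then have x2: "x = (x-2)+2" and xn: "x - 2 < n" and xi: "x - 2 \<noteq> i" using that by auto
    have "al < f ((x-2)+2)" by (rule f_o[OF xn xi])
    then show ?thesis using f_i x2 by simp
  qed
  have am: "(ARG_MIN f x. x \<in> {1..<n+2}) = i+2"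
    unfolding arg_min_def
  proof (rule some_equality)
    show "is_arg_min f (\<lambda>x. x \<in> {1..<n+2}) (i+2)"
      unfolding is_arg_min_def using others i by force
    fix y assume y: "is_arg_min f (\<lambda>x. x \<in> {1..<n+2}) y"
    show "y = i+2"
    proof (rule ccontr)
      assume "y \<noteq> i+2"
      then have "f (i+2) < f y" using y others unfolding is_arg_min_def by blast
      then show False using y i unfolding is_arg_min_def by force
    qed
  qed
  define t1 where "t1 = f (i+2)"
  have t10: "0 \<le> t1" unfolding t1_def fx r0 using nn ri by simp
  have T: "fm_T2 m lam dl n (\<rho>, \<omega>) = min (next_meet m lam dl \<rho> \<omega> 0 1 t1) (next_meet m lam dl \<rho> \<omega> (i+2) 1 t1) - t1"
  proof -
    have am': "(ARG_MIN (\<lambda>x. meet_time m lam dl \<rho> \<omega> 0 x 0) x. x \<in> {1..<n+2}) = i+2"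
      using am unfolding f_def .
    have "fm_T2 m lam dl n (\<rho>, \<omega>) = (if i+2 = 1 then 0 else
        min (next_meet m lam dl \<rho> \<omega> 0 1 (meet_time m lam dl \<rho> \<omega> 0 (i+2) 0))
            (next_meet m lam dl \<rho> \<omega> (i+2) 1 (meet_time m lam dl \<rho> \<omega> 0 (i+2) 0))
         - meet_time m lam dl \<rho> \<omega> 0 (i+2) 0)"
      unfolding fm_T2_def split_conv am' Let_def ..
    then show ?thesis unfolding t1_def f_def by simp
  qed
  have N1: "al + s < next_meet m lam dl \<rho> \<omega> 0 1 t1"
  proof -
    have B: "\<omega> (0,1,0) / dl \<le> meet_time m lam dl \<rho> \<omega> 0 1 q" for q
      using meet_time_ge0[OF nn, of m lam dl \<rho> 0 1 q] MR01[OF m] dl by simp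
    have "al + s < \<omega> (0,1,0) / dl" using f_1 unfolding fx MR01[OF m] .
    moreover have "t1 < \<omega> (0,1,0) / dl" using calculation f_i s unfolding t1_def by simp
    ultimately show ?thesis using next_meet_ge[OF B] by (meson less_le_trans)
  qed
  have N2: "al + s < next_meet m lam dl \<rho> \<omega> (i+2) 1 t1"
  proof -
    have q: "meet_rate m lam dl \<rho> (i+2) 1 = k*\<rho> i 1 + dl" using MR1[OF m] unfolding k_def by simp
    have qp: "0 < k*\<rho> i 1 + dl" by (rule E(2))
    have B: "\<omega> (1,i+2,0) / (k*\<rho> i 1 + dl) \<le> meet_time m lam dl \<rho> \<omega> (i+2) 1 q'" for q'
      using meet_time_ge0[OF nn, of m lam dl \<rho> "i+2" 1 q'] q qp by simp
    have "al + s < \<omega> (1,i+2,0) / (k*\<rho> i 1 + dl)" using E(6) qp by (simp add: pos_less_divide_eq)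
    moreover have "t1 < \<omega> (1,i+2,0) / (k*\<rho> i 1 + dl)" using calculation f_i s unfolding t1_def by simp
    ultimately show ?thesis using next_meet_ge[OF B] by (meson less_le_trans)
  qed
  show ?thesis unfolding T using N1 N2 f_i unfolding t1_def by simp
qed

lemma count_le: "(\<Sum>l\<in>{1..L}. of_bool (real l \<le> T) :: real) \<le> max 0 T"
proof (induction L)
  case 0 then show ?case by simp
next
  case (Suc L)
  show ?case
  proof (cases "real (Suc L) \<le> T")
    case True
    have "(\<Sum>l\<in>{1..L}. of_bool (real l \<le> T) :: real) \<le> of_nat (card {1..L}) * 1"
      by (rule sum_bounded_above) simp
    then have "(\<Sum>l\<in>{1..L}. of_bool (real l \<le> T) :: real) \<le> real L" by simp
    then show ?thesis using True by (simp add: sum.cl_ivl_Suc)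
  next
    case False
    then show ?thesis using Suc.IH by (simp add: sum.cl_ivl_Suc)
  qed
qed

lemma sum_le_T2:
  assumes m: "2 \<le> m" and al: "0 < al" and dl: "0 < dl" and nn: "\<forall>c. 0 \<le> \<omega> c"
  shows "(\<Sum>l\<in>{1..L}. \<Sum>i<n. of_bool (Cnd (pi/2*(lam-dl)) dl n al (real l) i \<rho> \<omega>) :: real)
     \<le> max 0 (fm_T2 m lam dl n (\<rho>, \<omega>))"
proof -
  have each: "(\<Sum>i<n. of_bool (Cnd (pi/2*(lam-dl)) dl n al (real l) i \<rho> \<omega>) :: real)
      \<le> of_bool (real l \<le> fm_T2 m lam dl n (\<rho>, \<omega>))" for l
  proof (cases "\<exists>i<n. Cnd (pi/2*(lam-dl)) dl n al (real l) i \<rho> \<omega>")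
    case True
    then obtain i0 where i0: "i0 < n" "Cnd (pi/2*(lam-dl)) dl n al (real l) i0 \<rho> \<omega>" by blast
    have "(\<Sum>i<n. of_bool (Cnd (pi/2*(lam-dl)) dl n al (real l) i \<rho> \<omega>) :: real) = (\<Sum>i<n. if i = i0 then 1 else 0)"
    proof (rule sum.cong[OF refl])
      fix i assume "i \<in> {..<n}"
      then have iN: "i < n" by simp
      show "(of_bool (Cnd (pi/2*(lam-dl)) dl n al (real l) i \<rho> \<omega>) :: real) = (if i = i0 then 1 else 0)"
      proof (cases "i = i0")
        case True then show ?thesis using i0 by simp
      next
        case False
        have "\<not> Cnd (pi/2*(lam-dl)) dl n al (real l) i \<rho> \<omega>"
        proof
          assume "Cnd (pi/2*(lam-dl)) dl n al (real l) i \<rho> \<omega>"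
          from Cnd_unique[OF this i0(2) iN i0(1)] False show False by simp
        qed
        then show ?thesis using False by simp
      qed
    qed
    also have "\<dots> = 1" using i0 by simp
    finally have eq: "(\<Sum>i<n. of_bool (Cnd (pi/2*(lam-dl)) dl n al (real l) i \<rho> \<omega>) :: real) = 1" .
    have "real l \<le> fm_T2 m lam dl n (\<rho>, \<omega>)"
      by (rule T2_ge[OF m i0(1) al _ dl nn i0(2)]) simp
    then show ?thesis using eq by simp
  next
    case False
    then have "(\<Sum>i<n. of_bool (Cnd (pi/2*(lam-dl)) dl n al (real l) i \<rho> \<omega>) :: real) = 0"
      by (intro sum.neutral) auto
    then show ?thesis by simp
  qed
  have "(\<Sum>l\<in>{1..L}. \<Sum>i<n. of_bool (Cnd (pi/2*(lam-dl)) dl n al (real l) i \<rho> \<omega>) :: real)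
      \<le> (\<Sum>l\<in>{1..L}. of_bool (real l \<le> fm_T2 m lam dl n (\<rho>, \<omega>)))"
    by (rule sum_mono) (rule each)
  also have "\<dots> \<le> max 0 (fm_T2 m lam dl n (\<rho>, \<omega>))" by (rule count_le)
  finally show ?thesis .
qed

lemma AE_nn: assumes m: "m \<ge> 2" shows "AE x in fm_space m n. \<forall>c. 0 \<le> snd x c"
proof -
  have s1: "sigma_finite_measure (RM m n)" using RM_prob[OF m] by (rule prob_space_imp_sigma_finite)
  have s2: "sigma_finite_measure PE" using PE_prob by (rule prob_space_imp_sigma_finite)
  interpret PS: pair_sigma_finite "RM m n" PE using s1 s2 by (rule pair_sigma_finite.intro)
  note [measurable] = P_compw[of _ m n]
  have S: "{x\<in>space (RM m n \<Otimes>\<^sub>M PE). \<forall>c. 0 \<le> snd x c} \<in> sets (RM m n \<Otimes>\<^sub>M PE)"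
    by measurable
  have ae: "AE \<rho> in RM m n. AE \<omega> in PE. \<forall>c. 0 \<le> snd (\<rho>, \<omega>) c"
  proof (rule AE_I2)
    fix \<rho>
    have "AE \<omega> in PE. \<forall>c. 0 \<le> \<omega> c"
    proof (subst AE_all_countable, intro allI)
      fix c
      show "AE \<omega> in PE. 0 \<le> \<omega> c"
        by (rule product_prob_space.AE_component[OF PE_pps]) (simp_all add: exp1_nonneg)
    qed
    then show "AE \<omega> in PE. \<forall>c. 0 \<le> snd (\<rho>, \<omega>) c" by simp
  qed
  show ?thesis unfolding fm_space_def by (rule PS.AE_pair_measure[OF S ae])
qed

lemma ennreal_of_bool: "(of_bool P :: ennreal) = ennreal (of_bool P)"
  by (cases P) simp_all

lemma main_bound:
  assumes m: "m \<ge> 2" and lam: "0 < lam" and dl: "0 < dl" "dl \<le> 1" "dl \<le> lam/2" and n: "1 \<le> n"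
  defines "K \<equiv> pi*lam/2+1"
  defines "A0 \<equiv> lam*exp(-(K+2))*exp(-1)*exp(-2)/(4*pi*K)"
  shows "ennreal (A0/2 * ln (1/dl)) \<le> (\<integral>\<^sup>+x. ennreal (fm_T2 m lam dl n x) \<partial>(fm_space m n))"
proof -
  define al where "al = 1/(real n*K)"
  define k where "k = pi/2*(lam-dl)"
  define L where "L = nat (floor (1/dl))"
  have pl0: "0 \<le> pi*lam" using lam by simp
  have K0: "0 < K" unfolding K_def using pl0 by (simp add: add_nonneg_pos)
  have A0pos: "0 < A0" unfolding A0_def using lam K0 by simp
  have n0: "0 < real n" using n by simp
  have al0: "0 < al" unfolding al_def using n0 K0 by simp
  have d1: "1 \<le> 1/dl" using dl by simp
  have fl0: "0 \<le> floor (1/dl)" using d1 dl by simp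
  have Lle: "real L \<le> 1/dl" unfolding L_def using fl0 by simp
  have Lge: "1/dl \<le> real L + 1" unfolding L_def using fl0 real_of_int_floor_add_one_ge[of "1/dl"] by simp
  define G where "G x = (\<Sum>l\<in>{1..L}. \<Sum>i<n. (of_bool (Cnd k dl n al (real l) i (fst x) (snd x)) :: ennreal))" for x
  have step1: "(\<integral>\<^sup>+x. G x \<partial>(fm_space m n)) \<le> (\<integral>\<^sup>+x. ennreal (fm_T2 m lam dl n x) \<partial>(fm_space m n))"
  proof (rule nn_integral_mono_AE)
    show "AE x in fm_space m n. G x \<le> ennreal (fm_T2 m lam dl n x)"
      using AE_nn[OF m, of n]
    proof (rule AE_mp, intro AE_I2 impI)
      fix x :: "(nat \<Rightarrow> nat \<Rightarrow> real) \<times> (nat\<times>nat\<times>nat \<Rightarrow> real)"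
      assume "x \<in> space (fm_space m n)" and nn: "\<forall>c. 0 \<le> snd x c"
      have "G x = ennreal (\<Sum>l\<in>{1..L}. \<Sum>i<n. (of_bool (Cnd k dl n al (real l) i (fst x) (snd x)) :: real))"
        unfolding G_def ennreal_of_bool by (simp add: sum_nonneg)
      also have "\<dots> \<le> ennreal (max 0 (fm_T2 m lam dl n (fst x, snd x)))"
        unfolding k_def by (rule ennreal_leI) (rule sum_le_T2[OF m al0 dl(1) nn])
      also have "\<dots> = ennreal (fm_T2 m lam dl n x)"
        by (cases "0 \<le> fm_T2 m lam dl n x") (auto simp: max_def ennreal_neg)
      finally show "G x \<le> ennreal (fm_T2 m lam dl n x)" .
    qed
  qed
  have CM: "(\<lambda>x. (of_bool (Cnd k dl n al (real l) i (fst x) (snd x)) :: ennreal)) \<in> borel_measurable (fm_space m n)"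
    if "i < n" for l i
  proof -
    note [measurable] = Cnd_meas[OF m that, of k dl al "real l"]
    show ?thesis unfolding fm_space_def by measurable
  qed
  have step2: "(\<integral>\<^sup>+x. G x \<partial>(fm_space m n)) = (\<Sum>l\<in>{1..L}. \<Sum>i<n. \<integral>\<^sup>+x. of_bool (Cnd k dl n al (real l) i (fst x) (snd x)) \<partial>(fm_space m n))"
  proof -
    have "(\<integral>\<^sup>+x. G x \<partial>(fm_space m n)) = (\<Sum>l\<in>{1..L}. \<integral>\<^sup>+x. (\<Sum>i<n. (of_bool (Cnd k dl n al (real l) i (fst x) (snd x)) :: ennreal)) \<partial>(fm_space m n))"
      unfolding G_def
    proof (rule nn_integral_sum)
      fix l
      show "(\<lambda>x. \<Sum>i<n. (of_bool (Cnd k dl n al (real l) i (fst x) (snd x)) :: ennreal)) \<in> borel_measurable (fm_space m n)"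
        by (rule borel_measurable_sum) (rule CM, simp)
    qed
    also have "\<dots> = (\<Sum>l\<in>{1..L}. \<Sum>i<n. \<integral>\<^sup>+x. of_bool (Cnd k dl n al (real l) i (fst x) (snd x)) \<partial>(fm_space m n))"
    proof (rule sum.cong[OF refl])
      fix l
      show "(\<integral>\<^sup>+x. (\<Sum>i<n. (of_bool (Cnd k dl n al (real l) i (fst x) (snd x)) :: ennreal)) \<partial>(fm_space m n))
          = (\<Sum>i<n. \<integral>\<^sup>+x. of_bool (Cnd k dl n al (real l) i (fst x) (snd x)) \<partial>(fm_space m n))"
        by (rule nn_integral_sum) (rule CM, simp)
    qed
    finally show ?thesis .
  qed
  have step3: "(\<Sum>l\<in>{1..L}. \<Sum>i<n. ennreal (A0 / (real n * (1 + real l))))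
      \<le> (\<Sum>l\<in>{1..L}. \<Sum>i<n. \<integral>\<^sup>+x. of_bool (Cnd k dl n al (real l) i (fst x) (snd x)) \<partial>(fm_space m n))"
  proof (intro sum_mono)
    fix l i assume l: "l \<in> {1..L}" and i: "i \<in> {..<n}"
    have s1: "real l * dl \<le> 1"
    proof -
      have "real l \<le> 1/dl" using l Lle by simp
      then show ?thesis using dl by (simp add: pos_le_divide_eq)
    qed
    show "ennreal (A0 / (real n * (1 + real l))) \<le> (\<integral>\<^sup>+x. of_bool (Cnd k dl n al (real l) i (fst x) (snd x)) \<partial>(fm_space m n))"
      unfolding A0_def k_def al_def K_def
      by (rule Cnd_lower[OF m lam dl n _ _ s1]) (use i in auto)
  qed
  have step4: "(\<Sum>l\<in>{1..L}. \<Sum>i<n. ennreal (A0 / (real n * (1 + real l)))) = ennreal (\<Sum>l\<in>{1..L}. A0 / (1 + real l))"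
  proof -
    have "(\<Sum>l\<in>{1..L}. \<Sum>i<n. ennreal (A0 / (real n * (1 + real l)))) = (\<Sum>l\<in>{1..L}. ennreal (A0 / (1 + real l)))"
    proof (rule sum.cong[OF refl])
      fix l
      have "(\<Sum>i<n. ennreal (A0 / (real n * (1 + real l)))) = ennreal (\<Sum>i<n. A0 / (real n * (1 + real l)))"
        by (rule sum_ennreal) (use A0pos n0 in simp)
      also have "(\<Sum>i<n. A0 / (real n * (1 + real l))) = A0 / (1 + real l)" using n0 by simp
      finally show "(\<Sum>i<n. ennreal (A0 / (real n * (1 + real l)))) = ennreal (A0 / (1 + real l))" .
    qed
    also have "\<dots> = ennreal (\<Sum>l\<in>{1..L}. A0 / (1 + real l))" using A0pos by (simp add: sum_nonneg)
    finally show ?thesis .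
  qed
  have step5: "A0/2 * ln (1/dl) \<le> (\<Sum>l\<in>{1..L}. A0 / (1 + real l))"
  proof -
    have "ln (1/dl) \<le> ln (real L + 1)" using Lge dl by simp
    also have "\<dots> \<le> harm L" by (rule ln_le_harm)
    finally have h: "A0/2 * ln (1/dl) \<le> A0/2 * harm L" using A0pos by (intro mult_left_mono) auto
    have "A0/2 * harm L = (\<Sum>l\<in>{1..L}. A0 * (1 / (2 * real l)))"
      unfolding harm_def sum_distrib_left by (rule sum.cong) (auto simp: field_simps)
    also have "\<dots> \<le> (\<Sum>l\<in>{1..L}. A0 * (1 / (1 + real l)))"
    proof (rule sum_mono)
      fix l assume l: "l \<in> {1..L}"
      have "1 / (2 * real l) \<le> 1 / (1 + real l)" using l by (intro divide_left_mono) auto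
      then show "A0 * (1 / (2 * real l)) \<le> A0 * (1 / (1 + real l))" using A0pos by (intro mult_left_mono) auto
    qed
    also have "\<dots> = (\<Sum>l\<in>{1..L}. A0 / (1 + real l))" by simp
    finally show ?thesis using h by linarith
  qed
  have "ennreal (A0/2 * ln (1/dl)) \<le> ennreal (\<Sum>l\<in>{1..L}. A0 / (1 + real l))" by (rule ennreal_leI[OF step5])
  also have "\<dots> \<le> (\<integral>\<^sup>+x. G x \<partial>(fm_space m n))" unfolding step2 step4[symmetric] by (rule step3)
  also have "\<dots> \<le> (\<integral>\<^sup>+x. ennreal (fm_T2 m lam dl n x) \<partial>(fm_space m n))" by (rule step1)
  finally show ?thesis .
qed

theorem lemma2:
  fixes m :: nat and lam :: real and del :: "nat \<Rightarrow> real"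
  assumes "m \<ge> 2" and "lam > 0" and "\<forall>n. del n > 0" and "del \<longlonglongrightarrow> 0"
  shows "\<exists>c c'. c > 0 \<and> c' > 0 \<and>
    (\<forall>\<^sub>F n in sequentially.
       (\<integral>\<^sup>+ \<omega>. ennreal (fm_T2 m lam (del n) n \<omega>) \<partial>(fm_space m n))
         \<ge> ennreal (min (c * ln (1 / del n)) (c' * real n / ln (real n))))"
proof -
  note m = assms(1) and lam = assms(2)
  define K where "K = pi*lam/2+1"
  define A0 where "A0 = lam*exp(-(K+2))*exp(-1)*exp(-2)/(4*pi*K)"
  have pl0: "0 \<le> pi*lam" using lam by simp
  have K0: "0 < K" unfolding K_def using pl0 by (simp add: add_nonneg_pos)
  have A0pos: "0 < A0" unfolding A0_def using lam K0 by simp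
  have mpos: "0 < min 1 (lam/2)" using lam by simp
  have ev: "\<forall>\<^sub>F n in sequentially. del n < min 1 (lam/2)"
    by (rule order_tendstoD(2)[OF assms(4) mpos])
  have ev2: "\<forall>\<^sub>F n in sequentially. 1 \<le> n" by (rule eventually_ge_at_top)
  have main: "\<forall>\<^sub>F n in sequentially.
       (\<integral>\<^sup>+ \<omega>. ennreal (fm_T2 m lam (del n) n \<omega>) \<partial>(fm_space m n))
         \<ge> ennreal (min (A0/2 * ln (1 / del n)) (1 * real n / ln (real n)))"
  proof (rule eventually_mono[OF eventually_conj[OF ev ev2]])
    fix n assume h: "del n < min 1 (lam/2) \<and> 1 \<le> n"
    have d0: "0 < del n" using assms(3) by simp
    have d1: "del n \<le> 1" and d2: "del n \<le> lam/2" using h by auto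
    have "ennreal (A0/2 * ln (1/del n)) \<le> (\<integral>\<^sup>+x. ennreal (fm_T2 m lam (del n) n x) \<partial>(fm_space m n))"
      unfolding A0_def K_def by (rule main_bound[OF m lam d0 d1 d2]) (use h in simp)
    moreover have "ennreal (min (A0/2 * ln (1 / del n)) (1 * real n / ln (real n))) \<le> ennreal (A0/2 * ln (1/del n))"
      by (rule ennreal_leI) (rule min.cobounded1)
    ultimately show "(\<integral>\<^sup>+ \<omega>. ennreal (fm_T2 m lam (del n) n \<omega>) \<partial>(fm_space m n))
         \<ge> ennreal (min (A0/2 * ln (1 / del n)) (1 * real n / ln (real n)))" by simp
  qed
  show ?thesis
    by (rule exI[of _ "A0/2"], rule exI[of _ 1]) (use A0pos main in simp)
qed

end
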